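(* Let $q$ be a positive integer and let $G=(V,E)$ be an undirected graph with $4q$ vertices. Then $G$ has a two-factor $E'$ all of whose cycle lengths are multiples of four if and only if $(G,\alpha)$ admits a $q$-biased $(2,2)$-dissolution, where $\alpha(v)=1$ for all $v\in V$.
   Context: A two-factor of $G=(V,E)$ is an edge subset $E'\subseteq E$ such that every vertex has degree exactly two in $(V,E')$, so $(V,E')$ is a disjoint union of cycles. For $V'\subseteq V(G)$ let $Z(V',G):=\{(x,y)\mid x\in V',\ y\in V(G)\setminus V',\ \{x,y\}\in E(G)\}$. For positive integers $s,\Delta_s$, an $(s,\Delta_s)$-dissolution for $G$ is a pair $(D,z)$ with $D\subset V(G)$ and $z\colon Z(D,G)\to\{0,\dots,s\}$ such that (a) each $v'\in D$ satisfies $\sum_{(v',v)\in Z(D,G)} z(v',v)=s$, and (b) each $v\in V(G)\setminus D$ satisfies $\sum_{(v',v)\in Z(D,G)} z(v',v)=\Delta_s$. Given $\alpha\colon V(G)\to\{0,\dots,s\}$ and an integer $r_\alpha$, a tuple $(D,z,z_\alpha,R_\alpha)$ is an $r_\alpha$-biased $(s,\Delta_s)$-dissolution for $(G,\alpha)$ if $(D,z)$ is an $(s,\Delta_s)$-dissolution, $z_\alpha\colon Z(D,G)\to\{0,\dots,s\}$, $R_\alpha\subseteq V(G)\setminus D$ with $|R_\alpha|=r_\alpha$, and (c) $z_\alpha(v',v)\le z(v',v)$ for all $(v',v)\in Z(D,G)$; (d) each $v'\in D$ satisfies $\sum_{(v',v)\in Z(D,G)} z_\alpha(v',v)=\alpha(v')$;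 (e) each $v\in R_\alpha$ satisfies $\alpha(v)+\sum_{(v',v)\in Z(D,G)} z_\alpha(v',v)>(s+\Delta_s)/2$. *)

theory Defs
  imports Main Complex_Main
begin

definition ugraph :: "'a set \<Rightarrow> 'a set set \<Rightarrow> bool" where
  "ugraph V E \<longleftrightarrow> finite V \<and> (\<forall>e\<in>E. e \<subseteq> V \<and> card e = 2)"

definition degree :: "'a set set \<Rightarrow> 'a \<Rightarrow> nat" where
  "degree E' v = card {e \<in> E'. v \<in> e}"

definition two_factor :: "'a set \<Rightarrow> 'a set set \<Rightarrow> 'a set set \<Rightarrow> bool" where
  "two_factor V E E' \<longleftrightarrow> E' \<subseteq> E \<and> (\<forall>v\<in>V. degree E' v = 2)"

text \<open>Connected component of v in (V,E'); for a two-factor these are exactly the cycles.\<close>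
definition component :: "'a set set \<Rightarrow> 'a \<Rightarrow> 'a set" where
  "component E' v = {u. (\<lambda>x y. {x, y} \<in> E')\<^sup>*\<^sup>* v u}"

definition cycle_lengths_mult4 :: "'a set \<Rightarrow> 'a set set \<Rightarrow> bool" where
  "cycle_lengths_mult4 V E' \<longleftrightarrow> (\<forall>v\<in>V. 4 dvd card (component E' v))"

definition Zset :: "'a set \<Rightarrow> 'a set \<Rightarrow> 'a set set \<Rightarrow> ('a \<times> 'a) set" where
  "Zset D V E = {(x, y). x \<in> D \<and> y \<in> V - D \<and> {x, y} \<in> E}"

definition dissolution ::
  "'a set \<Rightarrow> 'a set set \<Rightarrow> nat \<Rightarrow> nat \<Rightarrow> 'a set \<Rightarrow> ('a \<times> 'a \<Rightarrow> nat) \<Rightarrow> bool" where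
  "dissolution V E s \<Delta> D z \<longleftrightarrow>
     D \<subset> V \<and>
     (\<forall>p\<in>Zset D V E. z p \<le> s) \<and>
     (\<forall>v'\<in>D. (\<Sum>v\<in>{v. (v', v) \<in> Zset D V E}. z (v', v)) = s) \<and>
     (\<forall>v\<in>V - D. (\<Sum>v'\<in>{v'. (v', v) \<in> Zset D V E}. z (v', v)) = \<Delta>)"

definition biased_dissolution ::
  "'a set \<Rightarrow> 'a set set \<Rightarrow> nat \<Rightarrow> nat \<Rightarrow> ('a \<Rightarrow> nat) \<Rightarrow> nat \<Rightarrow>
   'a set \<Rightarrow> ('a \<times> 'a \<Rightarrow> nat) \<Rightarrow> ('a \<times> 'a \<Rightarrow> nat) \<Rightarrow> 'a set \<Rightarrow> bool" where
  "biased_dissolution V E s \<Delta> \<alpha> r D z z\<alpha> R \<longleftrightarrow>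
     dissolution V E s \<Delta> D z \<and>
     (\<forall>p\<in>Zset D V E. z\<alpha> p \<le> s) \<and>
     R \<subseteq> V - D \<and> card R = r \<and>
     (\<forall>p\<in>Zset D V E. z\<alpha> p \<le> z p) \<and>
     (\<forall>v'\<in>D. (\<Sum>v\<in>{v. (v', v) \<in> Zset D V E}. z\<alpha> (v', v)) = \<alpha> v') \<and>
     (\<forall>v\<in>R. real (\<alpha> v + (\<Sum>v'\<in>{v'. (v', v) \<in> Zset D V E}. z\<alpha> (v', v)))
               > (real s + real \<Delta>) / 2)"

end

theory Submission imports Defs begin

lemma two_elems: assumes "card S = 2" "x\<in>S" "y\<in>S" "x\<noteq>y" shows "S = {x,y}"
  using assms by (auto simp: card_2_iff)

fun walk :: "('a \<Rightarrow> 'a set) \<Rightarrow> 'a \<Rightarrow> 'a \<Rightarrow> nat \<Rightarrow> 'a" where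
  "walk N a b 0 = a"
| "walk N a b (Suc 0) = b"
| "walk N a b (Suc (Suc n)) = (SOME u. u \<in> N (walk N a b (Suc n)) \<and> u \<noteq> walk N a b n)"

declare walk.simps(3)[simp del]

locale reg2 =
  fixes V :: "'a set" and N :: "'a \<Rightarrow> 'a set"
  assumes finV: "finite V"
    and card2: "\<And>v. v \<in> V \<Longrightarrow> card (N v) = 2"
    and NV: "\<And>v u. v \<in> V \<Longrightarrow> u \<in> N v \<Longrightarrow> u \<in> V"
    and symN: "\<And>u v. u \<in> N v \<longleftrightarrow> v \<in> N u"
    and irr: "\<And>v. v \<notin> N v"
begin

definition comp :: "'a \<Rightarrow> 'a set" where
  "comp v = {u. (\<lambda>x y. y \<in> N x)\<^sup>*\<^sup>* v u}"

definition good :: "'a set \<Rightarrow> ('a \<Rightarrow> nat) \<Rightarrow> bool" where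
  "good C f \<longleftrightarrow> (\<forall>v\<in>C. f v < 4 \<and> (\<exists>u1 u2. N v = {u1,u2} \<and> f u1 = (f v + 1) mod 4 \<and> f u2 = (f v + 3) mod 4))"

lemma walk_step:
  assumes "walk N a b (Suc n) \<in> V"
  shows "walk N a b (Suc (Suc n)) \<in> N (walk N a b (Suc n)) \<and> walk N a b (Suc (Suc n)) \<noteq> walk N a b n"
proof -
  have "card (N (walk N a b (Suc n))) = 2" using card2 assms by blast
  then obtain x y where "N (walk N a b (Suc n)) = {x,y}" "x \<noteq> y" by (auto simp: card_2_iff)
  hence ex: "\<exists>u. u \<in> N (walk N a b (Suc n)) \<and> u \<noteq> walk N a b n" by blast
  show ?thesis unfolding walk.simps(3) by (rule someI_ex[OF ex])
qed

lemma walk_basic: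
  assumes aV: "a \<in> V" and bN: "b \<in> N a"
  shows "walk N a b n \<in> V \<and> walk N a b (Suc n) \<in> N (walk N a b n)"
proof (induction n)
  case 0 show ?case using aV bN by simp
next
  case (Suc n)
  hence v1: "walk N a b (Suc n) \<in> V" using NV by blast
  thus ?case using walk_step[OF v1] by blast
qed

lemma comp_sym: assumes "u \<in> comp v" shows "v \<in> comp u"
proof -
  have "symp (\<lambda>x y. y \<in> N x)" unfolding symp_def using symN by blast
  thus ?thesis using assms unfolding comp_def by (auto dest: sympD[OF symp_rtranclp])
qed

lemma comp_eq: assumes "u \<in> comp v" shows "comp u = comp v"
proof -
  have 1: "(\<lambda>x y. y \<in> N x)\<^sup>*\<^sup>* v u" using assms unfolding comp_def by simp
  have 2: "(\<lambda>x y. y \<in> N x)\<^sup>*\<^sup>* u v" using comp_sym[OF assms] unfolding comp_def by simp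
  show ?thesis unfolding comp_def using 1 2 by (auto intro: rtranclp_trans)
qed

lemma comp_nb: assumes "u \<in> N v" shows "u \<in> comp v"
  using assms unfolding comp_def by auto

lemma cycle:
  assumes aV: "a \<in> V" and bN: "b \<in> N a" and d4: "4 dvd card (comp a)"
  shows "\<exists>f. good (comp a) f"
proof -
  let ?w = "walk N a b"
  have wV: "\<And>n. ?w n \<in> V" and wN: "\<And>n. ?w (Suc n) \<in> N (?w n)"
    using walk_basic[OF aV bN] by auto
  have wNb: "?w n \<in> N (?w (Suc n))" for n using wN[of n] symN by blast
  have wbt: "?w (Suc (Suc n)) \<noteq> ?w n" for n using walk_step[OF wV[of "Suc n"]] by blast
  have wne: "?w (Suc n) \<noteq> ?w n" for n using wN[of n] irr[of "?w n"] by auto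
  have nbw: "N (?w (Suc n)) = {?w n, ?w (Suc (Suc n))}" for n
    using two_elems[of "N (?w (Suc n))" "?w n" "?w (Suc (Suc n))"] card2[OF wV[of "Suc n"]] wNb[of n] wN[of "Suc n"] wbt[of n] by auto
  have "\<not> inj_on ?w {..card V}"
  proof
    assume "inj_on ?w {..card V}"
    hence "card (?w ` {..card V}) = card V + 1" by (simp add: card_image)
    moreover have "card (?w ` {..card V}) \<le> card V" using wV finV by (intro card_mono) auto
    ultimately show False by simp
  qed
  then obtain i j where ij: "i \<noteq> j" "?w i = ?w j" unfolding inj_on_def by blast
  have ex: "\<exists>j. j > 0 \<and> ?w j \<in> ?w ` {..<j}"
  proof (cases "i < j")
    case True thus ?thesis using ij by (intro exI[of _ j]) (auto intro!: image_eqI[of _ _ i])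
  next
    case False thus ?thesis using ij by (intro exI[of _ i]) (auto intro!: image_eqI[of _ _ j])
  qed
  define p where "p = (LEAST j. j > 0 \<and> ?w j \<in> ?w ` {..<j})"
  have p: "p > 0 \<and> ?w p \<in> ?w ` {..<p}" unfolding p_def by (rule LeastI_ex[OF ex])
  have inj: "\<And>i j. i < p \<Longrightarrow> j < p \<Longrightarrow> ?w i = ?w j \<Longrightarrow> i = j"
  proof (rule ccontr)
    fix i j assume h: "i < p" "j < p" "?w i = ?w j" "i \<noteq> j"
    have "\<exists>k<p. k > 0 \<and> ?w k \<in> ?w ` {..<k}"
    proof (cases "i < j")
      case True
      have "?w j \<in> ?w ` {..<j}" by (rule image_eqI[where x=i]) (use h True in auto)
      thus ?thesis using h True by (intro exI[of _ j]) simp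
    next
      case False
      hence "j < i" using h by simp
      have "?w i \<in> ?w ` {..<i}" by (rule image_eqI[where x=j]) (use h \<open>j < i\<close> in auto)
      thus ?thesis using h \<open>j < i\<close> by (intro exI[of _ i]) simp
    qed
    then obtain k where k: "k < p" "k > 0 \<and> ?w k \<in> ?w ` {..<k}" by (elim exE conjE) simp
    have "p \<le> k" unfolding p_def by (rule Least_le[of "\<lambda>j. j > 0 \<and> ?w j \<in> ?w ` {..<j}" k, OF k(2)])
    thus False using k(1) by simp
  qed
  obtain m where m: "m < p" "?w p = ?w m" using p by auto
  obtain p' where p': "p = Suc p'" using p by (cases p) auto
  have m0: "m = 0"
  proof (rule ccontr)
    assume "m \<noteq> 0"
    then obtain m' where m': "m = Suc m'" by (cases m) auto
    have A: "?w p' \<in> {?w m', ?w (Suc (Suc m'))}" using wNb[of p'] nbw[of m'] m p' m' by simp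
    have B: "?w p' \<noteq> ?w m'" using inj[of p' m'] m p' m' by auto
    have C: "?w p' \<noteq> ?w (Suc (Suc m'))"
    proof (cases "Suc (Suc m') = p")
      case True
      hence "p' = m" using p' m' by simp
      have e1: "?w (Suc (Suc m')) = ?w p" using True by simp
      have e2: "?w p = ?w p'" using m(2) \<open>p' = m\<close> by simp
      have e3: "?w (Suc p') \<noteq> ?w p'" by (rule wne)
      have e4: "?w p = ?w (Suc p')" using p' by simp
      show ?thesis using e1 e2 e3 e4 by metis
    next
      case False
      hence lt: "Suc (Suc m') < p" using m m' by simp
      show ?thesis
      proof
        assume h: "?w p' = ?w (Suc (Suc m'))"
        have "p' < p" using p' by simp
        hence "p' = Suc (Suc m')" using inj[OF _ lt h] by simp
        hence "p = Suc (Suc m)" using p' m' by simp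
        hence "?w (Suc (Suc m)) = ?w m" using m(2) by simp
        thus False using wbt[of m] by simp
      qed
    qed
    show False using A B C by blast
  qed
  have wpa: "?w p = a" using m m0 by simp
  have p3: "p \<ge> 3"
  proof -
    have "p \<noteq> 1"
    proof
      assume "p = 1" hence "?w (Suc 0) = ?w 0" using wpa by simp
      thus False using wne[of 0] by simp
    qed
    moreover have "p \<noteq> 2"
    proof
      assume "p = 2" hence "?w (Suc (Suc 0)) = ?w 0" using wpa by (simp add: numeral_2_eq_2)
      thus False using wbt[of 0] by simp
    qed
    ultimately show ?thesis using p by linarith
  qed
  have w1: "?w (Suc p) = ?w 1"
  proof -
    have "?w 1 \<in> N (?w p)" using wpa bN by simp
    hence "?w 1 \<in> {?w p', ?w (Suc p)}" using nbw[of p'] p' by simp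
    moreover have "?w 1 \<noteq> ?w p'" using inj[of 1 p'] p3 p' by auto
    ultimately show ?thesis by auto
  qed
  have per2: "?w (n + p) = ?w n \<and> ?w (Suc n + p) = ?w (Suc n)" for n
  proof (induction n)
    case 0 thus ?case using wpa w1 by simp
  next
    case (Suc n)
    have "?w (Suc (Suc n) + p) = ?w (Suc (Suc (n + p)))" by simp
    also have "\<dots> = ?w (Suc (Suc n))" using Suc by (simp add: walk.simps(3))
    finally show ?case using Suc by simp
  qed
  have perk: "?w (n + k * p) = ?w n" for n k
  proof (induction k)
    case 0 thus ?case by simp
  next
    case (Suc k)
    have "n + Suc k * p = (n + k * p) + p" by simp
    hence "?w (n + Suc k * p) = ?w (n + k * p)" using per2[of "n + k * p"] by (simp only:)
    thus ?case using Suc by simp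
  qed
  have wmod: "?w n = ?w (n mod p)" for n
    using perk[of "n mod p" "n div p"] by simp
  have injp: "inj_on ?w {..<p}" using inj unfolding inj_on_def by blast
  have compeq: "comp a = ?w ` {..<p}"
  proof
    show "?w ` {..<p} \<subseteq> comp a"
    proof -
      have "?w n \<in> comp a" for n
      proof (induction n)
        case 0 thus ?case by (simp add: comp_def)
      next
        case (Suc n) thus ?case using wN[of n] unfolding comp_def
          by (auto intro: rtranclp.rtrancl_into_rtrancl)
      qed
      thus ?thesis by blast
    qed
  next
    show "comp a \<subseteq> ?w ` {..<p}"
    proof
      fix u assume "u \<in> comp a"
      hence "(\<lambda>x y. y \<in> N x)\<^sup>*\<^sup>* a u" by (simp add: comp_def)
      hence "u \<in> range ?w"
      proof (induction rule: rtranclp_induct)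
        case base thus ?case by (auto intro: image_eqI[of _ _ 0])
      next
        case (step y z)
        then obtain n where n: "y = ?w n" by auto
        obtain k where k: "n + p = Suc k" using p by (cases "n + p") auto
        have "y = ?w (Suc k)" using n per2[of n] k by simp
        hence "z \<in> {?w k, ?w (Suc (Suc k))}" using step nbw[of k] by simp
        thus ?case by auto
      qed
      then obtain n where "u = ?w n" by auto
      thus "u \<in> ?w ` {..<p}" using wmod[of n] p by auto
    qed
  qed
  define f where "f = (\<lambda>v. inv_into {..<p} ?w v mod 4)"
  have d4p: "4 dvd p" using d4 compeq card_image[OF injp] by simp
  have fw: "f (?w n) = n mod 4" for n
  proof -
    have "f (?w n) = inv_into {..<p} ?w (?w (n mod p)) mod 4" using wmod[of n] f_def by simp
    also have "\<dots> = (n mod p) mod 4" using inv_into_f_f[OF injp, of "n mod p"] p by simp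
    also have "\<dots> = n mod 4" using d4p by (simp add: mod_mod_cancel)
    finally show ?thesis .
  qed
  have "good (comp a) f"
    unfolding good_def
  proof
    fix v assume "v \<in> comp a"
    then obtain i where i: "v = ?w i" using compeq by auto
    obtain k where k: "i + p = Suc k" using p by (cases "i + p") auto
    have v: "v = ?w (Suc k)" using i per2[of i] k by simp
    have "N v = {?w (Suc (Suc k)), ?w k}" using nbw[of k] v by auto
    moreover have "f (?w (Suc (Suc k))) = (f v + 1) mod 4" using fw v by presburger
    moreover have "f (?w k) = (f v + 3) mod 4" using fw v by presburger
    moreover have "f v < 4" using fw v by simp
    ultimately show "f v < 4 \<and> (\<exists>u1 u2. N v = {u1, u2} \<and> f u1 = (f v + 1) mod 4 \<and> f u2 = (f v + 3) mod 4)"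
      by blast
  qed
  thus ?thesis by blast
qed

lemma global:
  assumes "\<forall>v\<in>V. 4 dvd card (comp v)"
  shows "\<exists>F::'a\<Rightarrow>nat. \<forall>v\<in>V. F v < 4 \<and> (\<exists>u1 u2. N v = {u1,u2} \<and> F u1 = (F v + 1) mod 4 \<and> F u2 = (F v + 3) mod 4)"
proof -
  define F where "F = (\<lambda>v. (SOME g. good (comp v) g) v)"
  have "F v < 4 \<and> (\<exists>u1 u2. N v = {u1,u2} \<and> F u1 = (F v + 1) mod 4 \<and> F u2 = (F v + 3) mod 4)"
    if vV: "v \<in> V" for v
  proof -
    have "card (N v) = 2" using card2 vV by blast
    then obtain b where b: "b \<in> N v" by (auto simp: card_2_iff)
    define g where "g = (SOME g. good (comp v) g)"
    have gg: "good (comp v) g" unfolding g_def using cycle[OF vV b] assms vV by (metis someI_ex)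
    have vc: "v \<in> comp v" by (simp add: comp_def)
    obtain u1 u2 where u: "N v = {u1,u2}" "g u1 = (g v + 1) mod 4" "g u2 = (g v + 3) mod 4" "g v < 4"
      using gg vc unfolding good_def by blast
    have Fx: "F x = g x" if "x \<in> comp v" for x
      using comp_eq[OF that] unfolding F_def g_def by simp
    have "u1 \<in> comp v" "u2 \<in> comp v" using u(1) comp_nb by auto
    hence e: "F u1 = g u1" "F u2 = g u2" "F v = g v" using Fx vc by auto
    have "F v < 4" using e(3) u(4) by simp
    moreover have "N v = {u1,u2} \<and> F u1 = (F v + 1) mod 4 \<and> F u2 = (F v + 3) mod 4"
      using u e by simp
    ultimately show ?thesis by blast
  qed
  thus ?thesis by blast
qed

end

definition nbr :: "'a set set \<Rightarrow> 'a \<Rightarrow> 'a set" where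
  "nbr E' v = {u. {v,u} \<in> E'}"

lemma sum_if_c: "finite S \<Longrightarrow> (\<Sum>y\<in>S. if P y then c else 0) = (c::nat) * card {y\<in>S. P y}"
  by (simp add: sum.inter_filter[symmetric] mult.commute)

lemma sum01:
  assumes "finite S" "\<And>x. x\<in>S \<Longrightarrow> f x \<le> (1::nat)"
  shows "sum f S = card {x\<in>S. f x = 1}"
proof -
  have "sum f S = (\<Sum>x\<in>S. if f x = 1 then 1 else 0)"
  proof (rule sum.cong[OF refl])
    fix x assume "x \<in> S" thus "f x = (if f x = 1 then 1 else 0)" using assms(2)[of x] by auto
  qed
  also have "\<dots> = card {x\<in>S. f x = 1}" using sum_if_c[OF assms(1), of "\<lambda>x. f x = 1" 1] by simp
  finally show ?thesis .
qed

lemma dc: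
  fixes g :: "'a \<times> 'a \<Rightarrow> nat"
  assumes fin: "finite V" and DV: "D \<subseteq> V"
    and cl: "\<And>x y. (x,y) \<in> Zset D V E \<Longrightarrow> g (x,y) \<noteq> 0 \<Longrightarrow> (x \<in> S \<longleftrightarrow> y \<in> S)"
  shows "(\<Sum>x\<in>D\<inter>S. \<Sum>y\<in>{y. (x,y) \<in> Zset D V E}. g (x,y))
       = (\<Sum>y\<in>(V-D)\<inter>S. \<Sum>x\<in>{x. (x,y) \<in> Zset D V E}. g (x,y))"
proof -
  let ?Z = "Zset D V E"
  have fA: "finite (D\<inter>S)" "finite ((V-D)\<inter>S)" using fin DV by (auto intro: finite_subset)
  have 1: "(\<Sum>y\<in>{y. (x,y) \<in> ?Z}. g (x,y)) = (\<Sum>y\<in>{y. y \<in> (V-D)\<inter>S \<and> (x,y) \<in> ?Z}. g (x,y))"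
    if x: "x \<in> D\<inter>S" for x
  proof (rule sum.mono_neutral_right)
    show "finite {y. (x,y) \<in> ?Z}" using fin by (rule finite_subset[rotated]) (auto simp: Zset_def)
    show "{y. y \<in> (V-D)\<inter>S \<and> (x,y) \<in> ?Z} \<subseteq> {y. (x,y) \<in> ?Z}" by auto
    show "\<forall>i\<in>{y. (x,y) \<in> ?Z} - {y. y \<in> (V-D)\<inter>S \<and> (x,y) \<in> ?Z}. g (x,i) = 0"
    proof
      fix i assume i: "i \<in> {y. (x,y) \<in> ?Z} - {y. y \<in> (V-D)\<inter>S \<and> (x,y) \<in> ?Z}"
      hence iZ: "(x,i) \<in> ?Z" by simp
      hence "i \<in> V - D" by (simp add: Zset_def)
      hence "i \<notin> S" using i by blast
      thus "g (x,i) = 0" using cl[OF iZ] x by auto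
    qed
  qed
  have 2: "(\<Sum>x\<in>{x. (x,y) \<in> ?Z}. g (x,y)) = (\<Sum>x\<in>{x. x \<in> D\<inter>S \<and> (x,y) \<in> ?Z}. g (x,y))"
    if y: "y \<in> (V-D)\<inter>S" for y
  proof (rule sum.mono_neutral_right)
    show "finite {x. (x,y) \<in> ?Z}" using fin by (rule finite_subset[rotated]) (use DV in \<open>auto simp: Zset_def\<close>)
    show "{x. x \<in> D\<inter>S \<and> (x,y) \<in> ?Z} \<subseteq> {x. (x,y) \<in> ?Z}" by auto
    show "\<forall>i\<in>{x. (x,y) \<in> ?Z} - {x. x \<in> D\<inter>S \<and> (x,y) \<in> ?Z}. g (i,y) = 0"
    proof
      fix i assume i: "i \<in> {x. (x,y) \<in> ?Z} - {x. x \<in> D\<inter>S \<and> (x,y) \<in> ?Z}"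
      hence iZ: "(i,y) \<in> ?Z" by simp
      hence "i \<in> D" by (simp add: Zset_def)
      hence "i \<notin> S" using i by blast
      thus "g (i,y) = 0" using cl[OF iZ] y by auto
    qed
  qed
  have "(\<Sum>x\<in>D\<inter>S. \<Sum>y\<in>{y. (x,y) \<in> ?Z}. g (x,y))
      = (\<Sum>x\<in>D\<inter>S. \<Sum>y\<in>{y. y \<in> (V-D)\<inter>S \<and> (x,y) \<in> ?Z}. g (x,y))"
    by (rule sum.cong[OF refl 1])
  also have "\<dots> = (\<Sum>y\<in>(V-D)\<inter>S. \<Sum>x\<in>{x. x \<in> D\<inter>S \<and> (x,y) \<in> ?Z}. g (x,y))"
    by (rule sum.swap_restrict[OF fA])
  also have "\<dots> = (\<Sum>y\<in>(V-D)\<inter>S. \<Sum>x\<in>{x. (x,y) \<in> ?Z}. g (x,y))"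
    by (rule sum.cong[OF refl 2[symmetric]])
  finally show ?thesis .
qed


lemma forward:
  fixes V :: "'a set" and E :: "'a set set" and q :: nat
  assumes ug: "ugraph V E" and qpos: "q > 0" and cV: "card V = 4 * q"
    and tf: "two_factor V E E'" and cl: "cycle_lengths_mult4 V E'"
  shows "\<exists>D z z\<alpha> R. biased_dissolution V E 2 2 (\<lambda>_. 1) q D z z\<alpha> R"
proof -
  have finV: "finite V" and Eprop: "\<And>e. e\<in>E \<Longrightarrow> e \<subseteq> V \<and> card e = 2"
    using ug unfolding ugraph_def by auto
  have E'E: "E' \<subseteq> E" and deg: "\<And>v. v\<in>V \<Longrightarrow> degree E' v = 2"
    using tf unfolding two_factor_def by auto
  have nbV: "\<And>v u. u \<in> nbr E' v \<Longrightarrow> u \<in> V \<and> v \<in> V \<and> {v,u} \<in> E"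
    using E'E Eprop unfolding nbr_def by blast
  have nbirr: "\<And>v. v \<notin> nbr E' v"
  proof
    fix v assume "v \<in> nbr E' v"
    hence "{v} \<in> E" using E'E unfolding nbr_def by auto
    thus False using Eprop by fastforce
  qed
  have nbsym: "\<And>u v. u \<in> nbr E' v \<longleftrightarrow> v \<in> nbr E' u" unfolding nbr_def by (simp add: insert_commute)
  have nbcard: "card (nbr E' v) = 2" if vV: "v \<in> V" for v
  proof -
    have "{e \<in> E'. v \<in> e} = (\<lambda>u. {v,u}) ` nbr E' v"
    proof
      show "(\<lambda>u. {v,u}) ` nbr E' v \<subseteq> {e \<in> E'. v \<in> e}" unfolding nbr_def by auto
      show "{e \<in> E'. v \<in> e} \<subseteq> (\<lambda>u. {v,u}) ` nbr E' v"
      proof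
        fix e assume e: "e \<in> {e \<in> E'. v \<in> e}"
        hence "card e = 2" using E'E Eprop by blast
        then obtain x y where xy: "e = {x,y}" by (auto simp: card_2_iff)
        hence e2: "e = {v, if x = v then y else x}" using e by auto
        moreover have "(if x = v then y else x) \<in> nbr E' v" using e e2 unfolding nbr_def by simp
        ultimately show "e \<in> (\<lambda>u. {v,u}) ` nbr E' v" by blast
      qed
    qed
    moreover have "inj_on (\<lambda>u. {v,u}) (nbr E' v)" unfolding inj_on_def by (auto simp: doubleton_eq_iff)
    ultimately have "card (nbr E' v) = degree E' v" unfolding degree_def by (simp add: card_image)
    thus ?thesis using deg vV by simp
  qed
  interpret G: reg2 V "nbr E'"
    using finV nbcard nbV nbsym nbirr by unfold_locales auto
  have compeq: "G.comp v = component E' v" for v unfolding G.comp_def component_def nbr_def by simp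
  have "\<forall>v\<in>V. 4 dvd card (G.comp v)" using cl compeq unfolding cycle_lengths_mult4_def by simp
  from G.global[OF this] obtain F :: "'a \<Rightarrow> nat" where
    F: "\<And>v. v\<in>V \<Longrightarrow> F v < 4 \<and> (\<exists>u1 u2. nbr E' v = {u1,u2} \<and> F u1 = (F v + 1) mod 4 \<and> F u2 = (F v + 3) mod 4)"
    by blast
  have par: "even (F u) \<longleftrightarrow> odd (F v)" if vu: "v \<in> V" "u \<in> nbr E' v" for u v
  proof -
    obtain u1 u2 where u: "nbr E' v = {u1,u2}" "F u1 = (F v + 1) mod 4" "F u2 = (F v + 3) mod 4" "F v < 4"
      using F[OF vu(1)] by blast
    hence "F u = (F v + 1) mod 4 \<or> F u = (F v + 3) mod 4" using vu(2) by auto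
    thus ?thesis using u(4) by presburger
  qed
  define D where "D = {v\<in>V. even (F v)}"
  define R where "R = {v\<in>V. F v = 1}"
  define z :: "'a \<times> 'a \<Rightarrow> nat" where "z = (\<lambda>(x,y). if {x,y} \<in> E' then 1 else 0)"
  define za :: "'a \<times> 'a \<Rightarrow> nat" where "za = (\<lambda>(x,y). if {x,y} \<in> E' \<and> F y = 1 then 1 else 0)"
  let ?Z = "Zset D V E"
  have DV: "D \<subseteq> V" unfolding D_def by auto
  have RV: "R \<subseteq> V - D" unfolding R_def D_def by auto
  have fo: "finite {y. (x,y) \<in> ?Z}" for x using finV by (rule finite_subset[rotated]) (auto simp: Zset_def)
  have fi: "finite {x. (x,y) \<in> ?Z}" for y using finV by (rule finite_subset[rotated]) (use DV in \<open>auto simp: Zset_def\<close>)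
  have outZ: "{y. (x,y) \<in> ?Z \<and> {x,y} \<in> E'} = nbr E' x" if x: "x \<in> D" for x
  proof
    show "{y. (x,y) \<in> ?Z \<and> {x,y} \<in> E'} \<subseteq> nbr E' x" unfolding nbr_def by auto
    show "nbr E' x \<subseteq> {y. (x,y) \<in> ?Z \<and> {x,y} \<in> E'}"
    proof
      fix y assume y: "y \<in> nbr E' x"
      have "x \<in> V" "even (F x)" using x unfolding D_def by auto
      hence "odd (F y)" using par y by blast
      hence "y \<notin> D" unfolding D_def by auto
      thus "y \<in> {y. (x,y) \<in> ?Z \<and> {x,y} \<in> E'}" using y x nbV[OF y] unfolding Zset_def nbr_def by auto
    qed
  qed
  have inZ: "{x. (x,y) \<in> ?Z \<and> {x,y} \<in> E'} = nbr E' y" if y: "y \<in> V - D" for y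
  proof
    show "{x. (x,y) \<in> ?Z \<and> {x,y} \<in> E'} \<subseteq> nbr E' y" unfolding nbr_def by (auto simp: insert_commute)
    show "nbr E' y \<subseteq> {x. (x,y) \<in> ?Z \<and> {x,y} \<in> E'}"
    proof
      fix x assume x: "x \<in> nbr E' y"
      have "y \<in> V" "odd (F y)" using y unfolding D_def by auto
      hence "even (F x)" using par x by blast
      hence "x \<in> D" using nbV[OF x] unfolding D_def by auto
      thus "x \<in> {x. (x,y) \<in> ?Z \<and> {x,y} \<in> E'}" using y x nbV[OF x] unfolding Zset_def nbr_def
        by (auto simp: insert_commute)
    qed
  qed
  have zout: "(\<Sum>y\<in>{y. (x,y) \<in> ?Z}. z (x,y)) = 2" if x: "x \<in> D" for x
  proof -
    have "(\<Sum>y\<in>{y. (x,y) \<in> ?Z}. z (x,y)) = card {y\<in>{y. (x,y) \<in> ?Z}. {x,y} \<in> E'}"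
      unfolding z_def using sum_if_c[OF fo[of x], of "\<lambda>y. {x,y} \<in> E'" 1] by simp
    also have "\<dots> = card (nbr E' x)" using outZ[OF x] by simp
    finally show ?thesis using nbcard x DV by auto
  qed
  have zin: "(\<Sum>x\<in>{x. (x,y) \<in> ?Z}. z (x,y)) = 2" if y: "y \<in> V - D" for y
  proof -
    have "(\<Sum>x\<in>{x. (x,y) \<in> ?Z}. z (x,y)) = card {x\<in>{x. (x,y) \<in> ?Z}. {x,y} \<in> E'}"
      unfolding z_def using sum_if_c[OF fi[of y], of "\<lambda>x. {x,y} \<in> E'" 1] by simp
    also have "\<dots> = card (nbr E' y)" using inZ[OF y] by simp
    finally show ?thesis using nbcard y by auto
  qed
  have zaout: "(\<Sum>y\<in>{y. (x,y) \<in> ?Z}. za (x,y)) = 1" if x: "x \<in> D" for x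
  proof -
    have "(\<Sum>y\<in>{y. (x,y) \<in> ?Z}. za (x,y)) = card {y\<in>{y. (x,y) \<in> ?Z}. {x,y} \<in> E' \<and> F y = 1}"
      unfolding za_def using sum_if_c[OF fo[of x], of "\<lambda>y. {x,y} \<in> E' \<and> F y = 1" 1] by simp
    also have "{y\<in>{y. (x,y) \<in> ?Z}. {x,y} \<in> E' \<and> F y = 1} = {y \<in> nbr E' x. F y = 1}"
      using outZ[OF x] by blast
    also have "card {y \<in> nbr E' x. F y = 1} = 1"
    proof -
      have xV: "x \<in> V" and ev: "even (F x)" using x unfolding D_def by auto
      obtain u1 u2 where u: "nbr E' x = {u1,u2}" "F u1 = (F x + 1) mod 4" "F u2 = (F x + 3) mod 4" "F x < 4"
        using F[OF xV] by blast
      have "F x = 0 \<or> F x = 2" using ev u(4) by presburger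
      thus ?thesis
      proof
        assume "F x = 0"
        hence "{y \<in> nbr E' x. F y = 1} = {u1}" using u by auto
        thus ?thesis by simp
      next
        assume "F x = 2"
        hence "{y \<in> nbr E' x. F y = 1} = {u2}" using u by auto
        thus ?thesis by simp
      qed
    qed
    finally show ?thesis .
  qed
  have zain: "(\<Sum>x\<in>{x. (x,y) \<in> ?Z}. za (x,y)) = (if y \<in> R then 2 else 0)" if y: "y \<in> V - D" for y
  proof (cases "y \<in> R")
    case True
    hence "F y = 1" unfolding R_def by simp
    hence "(\<Sum>x\<in>{x. (x,y) \<in> ?Z}. za (x,y)) = (\<Sum>x\<in>{x. (x,y) \<in> ?Z}. z (x,y))"
      unfolding za_def z_def by simp
    thus ?thesis using zin[OF y] True by simp
  next
    case False
    hence "F y \<noteq> 1" using y unfolding R_def by simp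
    thus ?thesis using False unfolding za_def by simp
  qed
  have dcz: "(\<Sum>x\<in>D\<inter>UNIV. \<Sum>y\<in>{y. (x,y) \<in> ?Z}. z (x,y)) = (\<Sum>y\<in>(V-D)\<inter>UNIV. \<Sum>x\<in>{x. (x,y) \<in> ?Z}. z (x,y))"
    by (rule dc[OF finV DV]) simp
  hence "2 * card D = 2 * card (V - D)" using zout zin by simp
  moreover have "card D + card (V - D) = card V" using finV DV
    by (metis card_Diff_subset card_mono diff_add_inverse finite_subset le_add_diff_inverse)
  ultimately have cD: "card D = 2 * q" using cV by simp
  have dcza: "(\<Sum>x\<in>D\<inter>UNIV. \<Sum>y\<in>{y. (x,y) \<in> ?Z}. za (x,y)) = (\<Sum>y\<in>(V-D)\<inter>UNIV. \<Sum>x\<in>{x. (x,y) \<in> ?Z}. za (x,y))"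
    by (rule dc[OF finV DV]) simp
  hence "card D = (\<Sum>y\<in>V-D. if y \<in> R then 2 else 0)" using zaout zain by simp
  also have "\<dots> = 2 * card {y \<in> V - D. y \<in> R}" using finV by (intro sum_if_c) simp
  also have "{y \<in> V - D. y \<in> R} = R" using RV by blast
  finally have cR: "card R = q" using cD by simp
  have "D \<noteq> V" using cD cV qpos by auto
  hence DsV: "D \<subset> V" using DV by blast
  have zle: "\<forall>p. z p \<le> 2" "\<forall>p. za p \<le> 2" "\<forall>p. za p \<le> z p"
    by (auto simp: z_def za_def split: prod.splits)
  have zreal: "\<forall>v\<in>R. real (1 + (\<Sum>v'\<in>{v'. (v', v) \<in> ?Z}. za (v', v))) > (real 2 + real 2) / 2"
  proof
    fix v assume v: "v \<in> R"
    hence s2: "(\<Sum>v'\<in>{v'. (v', v) \<in> ?Z}. za (v', v)) = 2" using zain[of v] RV by auto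
    show "real (1 + (\<Sum>v'\<in>{v'. (v', v) \<in> ?Z}. za (v', v))) > (real 2 + real 2) / 2"
      by (simp add: s2)
  qed
  have dis: "dissolution V E 2 2 D z" unfolding dissolution_def using DsV zout zin zle by auto
  have "biased_dissolution V E 2 2 (\<lambda>_. 1) q D z za R"
    unfolding biased_dissolution_def using dis zle RV cR zaout zreal by auto
  thus ?thesis by blast
qed


lemma backward:
  fixes V :: "'a set" and E :: "'a set set" and q :: nat
  assumes ug: "ugraph V E" and qpos: "q > 0" and cV: "card V = 4 * q"
    and bd: "biased_dissolution V E 2 2 (\<lambda>_. 1) q D z za R"
  shows "\<exists>E'. two_factor V E E' \<and> cycle_lengths_mult4 V E'"
proof -
  let ?Z = "Zset D V E"
  have finV: "finite V" and Eprop: "\<And>e. e\<in>E \<Longrightarrow> e \<subseteq> V \<and> card e = 2"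
    using ug unfolding ugraph_def by auto
  have DsV: "D \<subset> V" and zle: "\<And>p. p \<in> ?Z \<Longrightarrow> z p \<le> 2"
    and zout: "\<And>x. x \<in> D \<Longrightarrow> (\<Sum>y\<in>{y. (x,y) \<in> ?Z}. z (x,y)) = 2"
    and zin: "\<And>y. y \<in> V - D \<Longrightarrow> (\<Sum>x\<in>{x. (x,y) \<in> ?Z}. z (x,y)) = 2"
    and RV: "R \<subseteq> V - D" and cR: "card R = q"
    and azle: "\<And>p. p \<in> ?Z \<Longrightarrow> za p \<le> z p"
    and aout: "\<And>x. x \<in> D \<Longrightarrow> (\<Sum>y\<in>{y. (x,y) \<in> ?Z}. za (x,y)) = 1"
    and ain: "\<And>y. y \<in> R \<Longrightarrow> real (1 + (\<Sum>x\<in>{x. (x,y) \<in> ?Z}. za (x,y))) > (real 2 + real 2) / 2"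
    using bd unfolding biased_dissolution_def dissolution_def by auto
  have DV: "D \<subseteq> V" using DsV by blast
  have fo: "finite {y. (x,y) \<in> ?Z}" for x using finV by (rule finite_subset[rotated]) (auto simp: Zset_def)
  have fi: "finite {x. (x,y) \<in> ?Z}" for y using finV by (rule finite_subset[rotated]) (use DV in \<open>auto simp: Zset_def\<close>)
  have ZD: "x \<in> D \<and> y \<in> V \<and> y \<notin> D \<and> {x,y} \<in> E" if "(x,y) \<in> ?Z" for x y
    using that unfolding Zset_def by auto
  define ina where "ina = (\<lambda>y. \<Sum>x\<in>{x. (x,y) \<in> ?Z}. za (x,y))"
  have ain2: "ina y \<ge> 2" if "y \<in> R" for y
  proof -
    have "real (1 + ina y) > 2" using ain[OF that] unfolding ina_def by simp
    hence "1 + ina y > 2" by linarith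
    thus ?thesis by simp
  qed
  have finD: "finite D" "finite (V - D)" "finite R" using finV DV RV by (auto intro: finite_subset)
  have "(\<Sum>x\<in>D\<inter>UNIV. \<Sum>y\<in>{y. (x,y) \<in> ?Z}. z (x,y)) = (\<Sum>y\<in>(V-D)\<inter>UNIV. \<Sum>x\<in>{x. (x,y) \<in> ?Z}. z (x,y))"
    by (rule dc[OF finV DV]) simp
  hence "2 * card D = 2 * card (V - D)" using zout zin by simp
  moreover have "card D + card (V - D) = card V" using finV DV
    by (metis card_Diff_subset card_mono diff_add_inverse finite_subset le_add_diff_inverse)
  ultimately have cD: "card D = 2 * q" using cV by simp
  have "(\<Sum>x\<in>D\<inter>UNIV. \<Sum>y\<in>{y. (x,y) \<in> ?Z}. za (x,y)) = (\<Sum>y\<in>(V-D)\<inter>UNIV. \<Sum>x\<in>{x. (x,y) \<in> ?Z}. za (x,y))"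
    by (rule dc[OF finV DV]) simp
  hence sumina: "sum ina (V - D) = 2 * q" using aout cD unfolding ina_def by simp
  have split: "sum ina (V - D) = sum ina ((V - D) - R) + sum ina R"
    using RV finD by (simp add: sum.subset_diff)
  have geR: "sum ina R \<ge> 2 * q"
  proof -
    have "sum (\<lambda>_. 2) R \<le> sum ina R" using ain2 by (intro sum_mono) auto
    thus ?thesis using cR by simp
  qed
  have s0: "sum ina ((V - D) - R) = 0" and sR: "sum ina R = sum (\<lambda>_. 2) R"
    using split sumina geR cR by auto
  have inR: "ina y = 2" if "y \<in> R" for y
    using sum_mono_inv[OF sR[symmetric] ain2 that finD(3)] by simp
  have notR: "ina y = 0" if "y \<in> V - D" "y \<notin> R" for y
    using s0 finD that by (simp add: sum_eq_0_iff)
  have inaval: "ina y = (if y \<in> R then 2 else 0)" if "y \<in> V - D" for y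
    using inR notR that by auto
  have z1: "z (x,y) \<le> 1" if xy: "(x,y) \<in> ?Z" for x y
  proof (rule ccontr)
    assume "\<not> z (x,y) \<le> 1"
    hence z2: "z (x,y) = 2" using zle[OF xy] by simp
    have x: "x \<in> D" and y: "y \<in> V - D" using ZD[OF xy] by auto
    have yo: "y \<in> {y. (x,y) \<in> ?Z}" and xi: "x \<in> {x. (x,y) \<in> ?Z}" using xy by auto
    have "(\<Sum>y'\<in>{y. (x,y) \<in> ?Z}. z (x,y')) = z (x,y) + (\<Sum>y'\<in>{y. (x,y) \<in> ?Z} - {y}. z (x,y'))"
      by (rule sum.remove[OF fo yo])
    hence "(\<Sum>y'\<in>{y. (x,y) \<in> ?Z} - {y}. z (x,y')) = 0" using zout[OF x] z2 by simp
    hence "\<forall>y'\<in>{y. (x,y) \<in> ?Z} - {y}. z (x,y') = 0" using fo by (simp add: sum_eq_0_iff)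
    hence "\<forall>y'\<in>{y. (x,y) \<in> ?Z} - {y}. za (x,y') = 0" using azle by (metis DiffD1 le_zero_eq mem_Collect_eq)
    hence "(\<Sum>y'\<in>{y. (x,y) \<in> ?Z} - {y}. za (x,y')) = 0" by simp
    moreover have "(\<Sum>y'\<in>{y. (x,y) \<in> ?Z}. za (x,y')) = za (x,y) + (\<Sum>y'\<in>{y. (x,y) \<in> ?Z} - {y}. za (x,y'))"
      by (rule sum.remove[OF fo yo])
    ultimately have a1: "za (x,y) = 1" using aout[OF x] by simp
    have "(\<Sum>x'\<in>{x. (x,y) \<in> ?Z}. z (x',y)) = z (x,y) + (\<Sum>x'\<in>{x. (x,y) \<in> ?Z} - {x}. z (x',y))"
      by (rule sum.remove[OF fi xi])
    hence "(\<Sum>x'\<in>{x. (x,y) \<in> ?Z} - {x}. z (x',y)) = 0" using zin[OF y] z2 by simp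
    hence "\<forall>x'\<in>{x. (x,y) \<in> ?Z} - {x}. z (x',y) = 0" using fi by (simp add: sum_eq_0_iff)
    hence "\<forall>x'\<in>{x. (x,y) \<in> ?Z} - {x}. za (x',y) = 0" using azle by (metis DiffD1 le_zero_eq mem_Collect_eq)
    hence "(\<Sum>x'\<in>{x. (x,y) \<in> ?Z} - {x}. za (x',y)) = 0" by simp
    moreover have "(\<Sum>x'\<in>{x. (x,y) \<in> ?Z}. za (x',y)) = za (x,y) + (\<Sum>x'\<in>{x. (x,y) \<in> ?Z} - {x}. za (x',y))"
      by (rule sum.remove[OF fi xi])
    ultimately have "ina y = 1" using a1 unfolding ina_def by simp
    thus False using inaval[OF y] by (simp split: if_splits)
  qed
  define E' where "E' = {{x,y} | x y. (x,y) \<in> ?Z \<and> z (x,y) = 1}"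
  have E'E: "E' \<subseteq> E" unfolding E'_def Zset_def by auto
  have nzE: "{x,y} \<in> E'" if "(x,y) \<in> ?Z" "z (x,y) \<noteq> 0" for x y
    using z1[OF that(1)] that unfolding E'_def by force
  have tf: "two_factor V E E'"
    unfolding two_factor_def
  proof (intro conjI ballI E'E)
    fix v assume vV: "v \<in> V"
    show "degree E' v = 2"
    proof (cases "v \<in> D")
      case True
      have "{e \<in> E'. v \<in> e} = (\<lambda>y. {v,y}) ` {y\<in>{y. (v,y) \<in> ?Z}. z (v,y) = 1}"
      proof
        show "(\<lambda>y. {v,y}) ` {y\<in>{y. (v,y) \<in> ?Z}. z (v,y) = 1} \<subseteq> {e \<in> E'. v \<in> e}"
          unfolding E'_def by blast
        show "{e \<in> E'. v \<in> e} \<subseteq> (\<lambda>y. {v,y}) ` {y\<in>{y. (v,y) \<in> ?Z}. z (v,y) = 1}"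
        proof
          fix e assume "e \<in> {e \<in> E'. v \<in> e}"
          then obtain x y where e: "e = {x,y}" "(x,y) \<in> ?Z" "z (x,y) = 1" "v \<in> e" unfolding E'_def by blast
          have "v \<noteq> y" using ZD[OF e(2)] True by auto
          hence "v = x" using e by auto
          thus "e \<in> (\<lambda>y. {v,y}) ` {y\<in>{y. (v,y) \<in> ?Z}. z (v,y) = 1}" using e by blast
        qed
      qed
      moreover have "inj_on (\<lambda>y. {v,y}) A" for A unfolding inj_on_def by (auto simp: doubleton_eq_iff)
      ultimately have "degree E' v = card {y\<in>{y. (v,y) \<in> ?Z}. z (v,y) = 1}"
        unfolding degree_def by (simp add: card_image)
      also have "\<dots> = (\<Sum>y\<in>{y. (v,y) \<in> ?Z}. z (v,y))" using sum01[OF fo[of v], where f="\<lambda>y. z (v,y)"] z1 by simp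
      finally show ?thesis using zout[OF True] by simp
    next
      case False
      hence vD: "v \<in> V - D" using vV by simp
      have "{e \<in> E'. v \<in> e} = (\<lambda>x. {x,v}) ` {x\<in>{x. (x,v) \<in> ?Z}. z (x,v) = 1}"
      proof
        show "(\<lambda>x. {x,v}) ` {x\<in>{x. (x,v) \<in> ?Z}. z (x,v) = 1} \<subseteq> {e \<in> E'. v \<in> e}"
          unfolding E'_def by blast
        show "{e \<in> E'. v \<in> e} \<subseteq> (\<lambda>x. {x,v}) ` {x\<in>{x. (x,v) \<in> ?Z}. z (x,v) = 1}"
        proof
          fix e assume "e \<in> {e \<in> E'. v \<in> e}"
          then obtain x y where e: "e = {x,y}" "(x,y) \<in> ?Z" "z (x,y) = 1" "v \<in> e" unfolding E'_def by blast
          have "v \<noteq> x" using ZD[OF e(2)] False by auto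
          hence "v = y" using e by auto
          thus "e \<in> (\<lambda>x. {x,v}) ` {x\<in>{x. (x,v) \<in> ?Z}. z (x,v) = 1}" using e by blast
        qed
      qed
      moreover have "inj_on (\<lambda>x. {x,v}) A" for A unfolding inj_on_def by (auto simp: doubleton_eq_iff)
      ultimately have "degree E' v = card {x\<in>{x. (x,v) \<in> ?Z}. z (x,v) = 1}"
        unfolding degree_def by (simp add: card_image)
      also have "\<dots> = (\<Sum>x\<in>{x. (x,v) \<in> ?Z}. z (x,v))" using sum01[OF fi[of v], where f="\<lambda>x. z (x,v)"] z1 by simp
      finally show ?thesis using zin[OF vD] by simp
    qed
  qed
  have cl: "cycle_lengths_mult4 V E'"
    unfolding cycle_lengths_mult4_def
  proof
    fix v assume vV: "v \<in> V"
    define C where "C = component E' v"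
    have closed: "w \<in> C" if "u \<in> C" "{u,w} \<in> E'" for u w
      using that unfolding C_def component_def by (auto intro: rtranclp.rtrancl_into_rtrancl)
    have CV: "C \<subseteq> V"
    proof
      fix u assume "u \<in> C"
      hence "(\<lambda>x y. {x,y} \<in> E')\<^sup>*\<^sup>* v u" unfolding C_def component_def by simp
      thus "u \<in> V"
      proof (induction rule: rtranclp_induct)
        case base thus ?case using vV .
      next
        case (step y w) thus ?case using E'E Eprop by blast
      qed
    qed
    have clz: "x \<in> C \<longleftrightarrow> y \<in> C" if "(x,y) \<in> ?Z" "z (x,y) \<noteq> 0" for x y
    proof -
      have "{x,y} \<in> E'" "{y,x} \<in> E'" using nzE[OF that] by (auto simp: insert_commute)
      thus ?thesis using closed by blast
    qed
    have cla: "x \<in> C \<longleftrightarrow> y \<in> C" if "(x,y) \<in> ?Z" "za (x,y) \<noteq> 0" for x y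
      using clz[OF that(1)] azle[OF that(1)] that(2) by simp
    have "(\<Sum>x\<in>D\<inter>C. \<Sum>y\<in>{y. (x,y) \<in> ?Z}. z (x,y)) = (\<Sum>y\<in>(V-D)\<inter>C. \<Sum>x\<in>{x. (x,y) \<in> ?Z}. z (x,y))"
      by (rule dc[OF finV DV clz])
    hence c1: "card (D \<inter> C) = card ((V - D) \<inter> C)" using zout zin by simp
    have "(\<Sum>x\<in>D\<inter>C. \<Sum>y\<in>{y. (x,y) \<in> ?Z}. za (x,y)) = (\<Sum>y\<in>(V-D)\<inter>C. \<Sum>x\<in>{x. (x,y) \<in> ?Z}. za (x,y))"
      by (rule dc[OF finV DV cla])
    hence "card (D \<inter> C) = (\<Sum>y\<in>(V-D)\<inter>C. ina y)" using aout unfolding ina_def by simp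
    also have "\<dots> = (\<Sum>y\<in>(V-D)\<inter>C. if y \<in> R then 2 else 0)" using inaval by (intro sum.cong) auto
    also have "\<dots> = 2 * card {y\<in>(V-D)\<inter>C. y \<in> R}" using finD by (intro sum_if_c) simp
    finally have c2: "card (D \<inter> C) = 2 * card {y\<in>(V-D)\<inter>C. y \<in> R}" .
    have Ceq: "C = (D \<inter> C) \<union> ((V - D) \<inter> C)" using CV by blast
    have "card ((D \<inter> C) \<union> ((V - D) \<inter> C)) = card (D \<inter> C) + card ((V - D) \<inter> C)"
      by (rule card_Un_disjoint) (use finD in auto)
    hence cardC: "card C = card (D \<inter> C) + card ((V - D) \<inter> C)" using arg_cong[OF Ceq, of card] by simp
    have "card C = 4 * card {y\<in>(V-D)\<inter>C. y \<in> R}" using cardC c1 c2 by simp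
    thus "4 dvd card (component E' v)" unfolding C_def by simp
  qed
  show ?thesis using tf cl by blast
qed

theorem lemma4:
  fixes V :: "'a set" and E :: "'a set set" and q :: nat
  assumes "ugraph V E" and "q > 0" and "card V = 4 * q"
  shows "(\<exists>E'. two_factor V E E' \<and> cycle_lengths_mult4 V E') \<longleftrightarrow>
         (\<exists>D z z\<alpha> R. biased_dissolution V E 2 2 (\<lambda>_. 1) q D z z\<alpha> R)"
  using forward[OF assms] backward[OF assms] by blast

end
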